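(* For every $k\geq 2$, with $n=2^k$, every cancellation-free linear circuit that computes the $n\times n$ Sierpinski gasket matrix $S_k$ has size at least $\frac{1}{2}n\log_2 n$.
   Context: The Sierpinski gasket matrices are defined by $S_0=(1)$ and $S_{k+1}=\begin{pmatrix}S_k&0\\S_k&S_k\end{pmatrix}$ (a $2^k\times 2^k$ matrix over $\mathbb{F}_2$). A linear circuit over $\mathbb{F}_2$ with inputs $x_1,\ldots,x_n$ is a directed acyclic graph whose in-degree-0 nodes are the inputs and whose other nodes (gates) have in-degree 2 and compute the XOR of their two children; $n$ nodes are designated as outputs $y_1,\ldots,y_n$, and the circuit computes $A$ if $\mathbf{y}=A\mathbf{x}$ for all $\mathbf{x}\in\mathbb{F}_2^n$. The size is the number of gates. The value vector $\kappa(u)\in\mathbb{F}_2^n$ of a node $u$ has $\kappa(u)_i=1$ iff $x_i$ occurs in the parity computed at $u$. A linear circuit is cancellation-free if whenever there is a directed path from a node $w$ to a node $u$, $\kappa(u)\geq\kappa(w)$ coordinatewise. *)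

theory Defs
  imports Complex_Main
begin

text \<open>Sierpinski gasket matrix S_k as a Boolean (F_2) matrix, 0-indexed,
  entries outside the 2^k x 2^k range are False.\<close>
fun sierp :: "nat \<Rightarrow> nat \<Rightarrow> nat \<Rightarrow> bool" where
  "sierp 0 i j = (i = 0 \<and> j = 0)"
| "sierp (Suc k) i j =
     (let h = 2 ^ k in
      if i < h then j < h \<and> sierp k i j
      else if i < 2 * h then
        (if j < h then sierp k (i - h) j else j < 2 * h \<and> sierp k (i - h) (j - h))
      else False)"

text \<open>A linear circuit with n inputs: nodes 0..n-1 are the inputs x_0..x_{n-1};
  nodes n..n+gates-1 are gates. Gate g has two distinct children lft g, rgt g,
  both with smaller index (a topological numbering of the DAG, w.l.o.g.).\<close>
record circuit =
  gates :: nat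
  lft :: "nat \<Rightarrow> nat"
  rgt :: "nat \<Rightarrow> nat"
  outp :: "nat \<Rightarrow> nat"

definition wf_circuit :: "nat \<Rightarrow> circuit \<Rightarrow> bool" where
  "wf_circuit n C \<longleftrightarrow>
     (\<forall>g. n \<le> g \<and> g < n + gates C \<longrightarrow>
        lft C g < g \<and> rgt C g < g \<and> lft C g \<noteq> rgt C g) \<and>
     (\<forall>i < n. outp C i < n + gates C)"

text \<open>Value of node u on input assignment x (over F_2 = bool with xor).\<close>
fun cval :: "nat \<Rightarrow> circuit \<Rightarrow> (nat \<Rightarrow> bool) \<Rightarrow> nat \<Rightarrow> bool" where
  "cval n C x u =
     (if u < n then x u
      else if lft C u < u \<and> rgt C u < u
      then (cval n C x (lft C u) \<noteq> cval n C x (rgt C u))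
      else False)"

definition computes :: "nat \<Rightarrow> circuit \<Rightarrow> (nat \<Rightarrow> nat \<Rightarrow> bool) \<Rightarrow> bool" where
  "computes n C A \<longleftrightarrow>
     (\<forall>x. \<forall>i < n. cval n C x (outp C i) = odd (card {j. j < n \<and> A i j \<and> x j}))"

text \<open>Value vector kappa(u): the set of input indices occurring in the parity at u.\<close>
fun kappa :: "nat \<Rightarrow> circuit \<Rightarrow> nat \<Rightarrow> nat set" where
  "kappa n C u =
     (if u < n then {u}
      else if lft C u < u \<and> rgt C u < u
      then (kappa n C (lft C u) - kappa n C (rgt C u)) \<union> (kappa n C (rgt C u) - kappa n C (lft C u))
      else {})"

definition cedges :: "nat \<Rightarrow> circuit \<Rightarrow> (nat \<times> nat) set" where
  "cedges n C = {(c, g). n \<le> g \<and> g < n + gates C \<and> (c = lft C g \<or> c = rgt C g)}"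

definition cancellation_free :: "nat \<Rightarrow> circuit \<Rightarrow> bool" where
  "cancellation_free n C \<longleftrightarrow>
     (\<forall>w u. (w, u) \<in> (cedges n C)\<^sup>+ \<longrightarrow> kappa n C w \<subseteq> kappa n C u)"

end

theory Submission
  imports Defs
begin


declare sierp.simps(2)[simp del]

lemma sierp_Suc: "sierp (Suc k) i j =
      (if i < 2^k then j < 2^k \<and> sierp k i j
      else if i < 2 * 2^k then
        (if j < 2^k then sierp k (i - 2^k) j else j < 2 * 2^k \<and> sierp k (i - 2^k) (j - 2^k))
      else False)"
  by (simp add: sierp.simps(2) Let_def)

lemma sierp_range: "sierp k i j \<Longrightarrow> i < 2^k \<and> j < 2^k"
proof (induction k arbitrary: i j)
  case 0 then show ?case by simp
next
  case (Suc k)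
  show ?case using Suc.prems Suc.IH[of "i - 2^k" j] Suc.IH[of "i - 2^k" "j - 2^k"]
    by (auto simp: sierp_Suc split: if_splits)
qed

lemma sierp_le: "sierp k i j \<Longrightarrow> j \<le> i"
proof (induction k arbitrary: i j)
  case 0 then show ?case by simp
next
  case (Suc k)
  show ?case using Suc.prems Suc.IH[of "i - 2^k" j] Suc.IH[of "i - 2^k" "j - 2^k"] Suc.IH[of i j]
    by (auto simp: sierp_Suc split: if_splits)
qed

lemma sierp_diag: "i < 2^k \<Longrightarrow> sierp k i i"
proof (induction k arbitrary: i)
  case 0 then show ?case by simp
next
  case (Suc k)
  show ?case using Suc.prems Suc.IH[of "i - 2^k"] Suc.IH[of i]
    by (auto simp: sierp_Suc)
qed


lemma lt_blk: "(x::nat) < B \<Longrightarrow> (q*B + x < c*B) = (q < c)"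
proof
  assume "x < B" "q*B + x < c*B"
  then have "q*B < c*B" by linarith
  then show "q < c" by (simp add: mult_less_cancel2)
next
  assume a: "x < B" "q < c"
  then have "Suc q \<le> c" by simp
  then have "Suc q * B \<le> c * B" by (rule mult_le_mono1)
  then show "q*B + x < c*B" using a by simp
qed

lemma sub_blk: "q \<ge> c \<Longrightarrow> (q*B + (x::nat)) - c*B = (q - c)*B + x"
  by (simp add: diff_mult_distrib)

lemma sierp_kron: "x < 2^b \<Longrightarrow> y < 2^b \<Longrightarrow>
   sierp (a+b) (q*2^b + x) (q'*2^b+y) = (sierp a q q' \<and> sierp b x y)"
proof (induction a arbitrary: q q')
  case 0
  show ?case
  proof (cases "q = 0 \<and> q' = 0")
    case True then show ?thesis by simp
  next
    case False
    have "\<not> (q*2^b + x < 1*2^b \<and> q'*2^b + y < 1*2^b)"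
      using False lt_blk[OF 0(1), of q 1] lt_blk[OF 0(2), of q' 1] by auto
    then show ?thesis using False sierp_range[of b "q*2^b + x" "q'*2^b+y"] by auto
  qed
next
  case (Suc a)
  have e: "Suc a + b = Suc (a+b)" by simp
  have h: "(2::nat)^(a+b) = 2^a*2^b" by (simp add: power_add)
  have h2: "2*((2::nat)^a*2^b) = (2*2^a)*2^b" by simp
  show ?case unfolding e sierp_Suc[of "a+b"] sierp_Suc[of a] h h2
    using lt_blk[OF Suc.prems(1), of q] lt_blk[OF Suc.prems(2), of q']
      sub_blk[of "2^a" q "2^b" x] sub_blk[of "2^a" q' "2^b" y]
      Suc.IH[OF Suc.prems, of q q'] Suc.IH[OF Suc.prems, of "q - 2^a" q']
      Suc.IH[OF Suc.prems, of "q - 2^a" "q' - 2^a"]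
    by (auto simp: not_less)
qed



declare kappa.simps[simp del] cval.simps[simp del]
lemma kappa_bound: "kappa n C u \<subseteq> {..<n}"
proof (induction u rule: less_induct)
  case (less u)
  show ?case using less by (subst kappa.simps) auto
qed

lemma kappa_finite: "finite (kappa n C u)"
  by (rule finite_subset[OF kappa_bound]) simp

lemma odd_symdiff: "finite A \<Longrightarrow> finite B \<Longrightarrow>
  odd (card ((A - B) \<union> (B - A))) = (odd (card A) \<noteq> odd (card B))"
proof -
  assume f: "finite A" "finite B"
  have d: "(A - B) \<inter> (B - A) = {}" by blast
  have "card ((A - B) \<union> (B - A)) = card (A - B) + card (B - A)"
    using f d by (simp add: card_Un_disjoint)
  moreover have "card (A - B) = card A - card (A \<inter> B)" using f by (simp add: card_Diff_subset_Int)
  moreover have "card (B - A) = card B - card (A \<inter> B)" using f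
    by (metis card_Diff_subset_Int finite_Int inf_commute)
  moreover have "card (A \<inter> B) \<le> card A" "card (A \<inter> B) \<le> card B" using f
    by (auto intro: card_mono)
  ultimately show ?thesis by presburger
qed

lemma cval_kappa: "cval n C x u = odd (card {j \<in> kappa n C u. x j})"
proof (induction u rule: less_induct)
  case (less u)
  show ?case
  proof (cases "u < n")
    case True
    have "{j. j = u \<and> x j} = (if x u then {u} else {})" by auto
    moreover have "kappa n C u = {u}" using True by (subst kappa.simps) simp
    moreover have "cval n C x u = x u" using True by (subst cval.simps) simp
    ultimately show ?thesis by simp
  next
    case False
    show ?thesis
    proof (cases "lft C u < u \<and> rgt C u < u")
      case True
      let ?A = "{j \<in> kappa n C (lft C u). x j}" and ?B = "{j \<in> kappa n C (rgt C u). x j}"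
      have fA: "finite ?A" "finite ?B" by (rule finite_subset[OF _ kappa_finite[of n C "lft C u"]], blast,
            rule finite_subset[OF _ kappa_finite[of n C "rgt C u"]], blast)
      have "{j \<in> kappa n C u. x j} = (?A - ?B) \<union> (?B - ?A)"
        using False True by (subst kappa.simps) auto
      then show ?thesis using False True less odd_symdiff[OF fA]
        by (subst cval.simps) simp
    next
      case f2: False
      have "kappa n C u = {}" using False f2 by (subst kappa.simps) auto
      moreover have "cval n C x u = False" using False f2 by (subst cval.simps) auto
      ultimately show ?thesis by simp
    qed
  qed
qed

lemma kappa_out: assumes "computes n C A" "i < n"
  shows "kappa n C (outp C i) = {j. j < n \<and> A i j}"
proof (rule set_eqI)
  fix j
  have h: "cval n C (\<lambda>y. y = j) (outp C i) = odd (card {y. y < n \<and> A i y \<and> y = j})"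
  proof -
    have "\<forall>i<n. cval n C (\<lambda>y. y = j) (outp C i) = odd (card {y. y < n \<and> A i y \<and> y = j})"
      using assms(1) unfolding computes_def by (rule spec)
    then show ?thesis using assms(2) by simp
  qed
  have s1: "{y. y < n \<and> A i y \<and> y = j} = (if j < n \<and> A i j then {j} else {})" by auto
  have s2: "{y \<in> kappa n C (outp C i). y = j} = (if j \<in> kappa n C (outp C i) then {j} else {})" by auto
  have "odd (card {y \<in> kappa n C (outp C i). y = j}) = odd (card {y. y < n \<and> A i y \<and> y = j})"
    using h by (simp only: cval_kappa)
  then have "odd (card (if j \<in> kappa n C (outp C i) then {j} else {})) = odd (card (if j < n \<and> A i j then {j} else ({}::nat set)))"
    by (simp only: s1 s2)
  then show "j \<in> kappa n C (outp C i) \<longleftrightarrow> j \<in> {j. j < n \<and> A i j}"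
    by (cases "j \<in> kappa n C (outp C i)"; cases "j < n \<and> A i j") auto
qed

locale cfc =
  fixes n :: nat and C :: circuit
  assumes wf: "wf_circuit n C" and cf: "cancellation_free n C"
begin

abbreviation "\<kappa> \<equiv> kappa n C"

lemma gate_ch: "n \<le> g \<Longrightarrow> g < n + gates C \<Longrightarrow> lft C g < g \<and> rgt C g < g"
  using wf unfolding wf_circuit_def by auto

lemma edge_l: "n \<le> g \<Longrightarrow> g < n + gates C \<Longrightarrow> (lft C g, g) \<in> cedges n C"
  unfolding cedges_def by auto
lemma edge_r: "n \<le> g \<Longrightarrow> g < n + gates C \<Longrightarrow> (rgt C g, g) \<in> cedges n C"
  unfolding cedges_def by auto

lemma sub_rt: "(w, u) \<in> (cedges n C)\<^sup>* \<Longrightarrow> \<kappa> w \<subseteq> \<kappa> u"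
  using cf unfolding cancellation_free_def by (auto simp: rtrancl_eq_or_trancl)

lemma gate_kappa:
  assumes "n \<le> g" "g < n + gates C"
  shows "\<kappa> g = \<kappa> (lft C g) \<union> \<kappa> (rgt C g)" "\<kappa> (lft C g) \<subseteq> \<kappa> g" "\<kappa> (rgt C g) \<subseteq> \<kappa> g"
proof -
  have s: "\<kappa> g = (\<kappa> (lft C g) - \<kappa> (rgt C g)) \<union> (\<kappa> (rgt C g) - \<kappa> (lft C g))"
    using gate_ch[OF assms] assms by (subst kappa.simps) auto
  show l: "\<kappa> (lft C g) \<subseteq> \<kappa> g" "\<kappa> (rgt C g) \<subseteq> \<kappa> g"
    using cf edge_l[OF assms] edge_r[OF assms] unfolding cancellation_free_def by auto
  show "\<kappa> g = \<kappa> (lft C g) \<union> \<kappa> (rgt C g)" using s l by blast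
qed

definition meetsH :: "nat set \<Rightarrow> nat \<Rightarrow> nat \<Rightarrow> bool" where
  "meetsH S l p \<longleftrightarrow> (\<exists>y\<in>S. y div 2^l = p)"

lemma walk:
  assumes "u < n + gates C" "x \<in> \<kappa> u" "x div 2^l = 2*a" "meetsH (\<kappa> u) l (2*a+1)"
  shows "\<exists>t c d. n \<le> t \<and> t < n + gates C \<and> (t, u) \<in> (cedges n C)\<^sup>* \<and>
     {c, d} = {lft C t, rgt C t} \<and> x \<in> \<kappa> c \<and> \<not> meetsH (\<kappa> c) l (2*a+1) \<and> meetsH (\<kappa> d) l (2*a+1)"
  using assms
proof (induction u rule: less_induct)
  case (less u)
  show ?case
  proof (cases "u < n")
    case True
    then have "\<kappa> u = {u}" by (simp add: kappa.simps)
    then show ?thesis using less.prems unfolding meetsH_def by auto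
  next
    case False
    then have g: "n \<le> u" by simp
    note gk = gate_kappa[OF g less.prems(1)]
    note ch = gate_ch[OF g less.prems(1)]
    let ?l = "lft C u" and ?r = "rgt C u"
    have ul: "?l < n + gates C" "?r < n + gates C" using ch less.prems(1) by auto
    have el: "(?l, u) \<in> (cedges n C)\<^sup>*" "(?r, u) \<in> (cedges n C)\<^sup>*"
      using edge_l[OF g less.prems(1)] edge_r[OF g less.prems(1)] by auto
    have m: "meetsH (\<kappa> ?l) l (2*a+1) \<or> meetsH (\<kappa> ?r) l (2*a+1)"
      using less.prems(4) gk(1) unfolding meetsH_def by auto
    have x: "x \<in> \<kappa> ?l \<or> x \<in> \<kappa> ?r" using less.prems(2) gk(1) by auto
    show ?thesis
    proof (cases "x \<in> \<kappa> ?l")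
      case xl: True
      show ?thesis
      proof (cases "meetsH (\<kappa> ?l) l (2*a+1)")
        case True
        from less.IH[OF conjunct1[OF ch] ul(1) xl less.prems(3) True]
        obtain t c d where "n \<le> t \<and> t < n + gates C \<and> (t, ?l) \<in> (cedges n C)\<^sup>* \<and>
          {c, d} = {lft C t, rgt C t} \<and> x \<in> \<kappa> c \<and> \<not> meetsH (\<kappa> c) l (2*a+1) \<and> meetsH (\<kappa> d) l (2*a+1)"
          by blast
        then show ?thesis using el(1) by (meson rtrancl_trans)
      next
        case False
        then show ?thesis using m xl g less.prems(1) by (intro exI[of _ u] exI[of _ ?l] exI[of _ ?r]) auto
      qed
    next
      case xr: False
      then have xr: "x \<in> \<kappa> ?r" using x by auto
      show ?thesis
      proof (cases "meetsH (\<kappa> ?r) l (2*a+1)")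
        case True
        from less.IH[OF conjunct2[OF ch] ul(2) xr less.prems(3) True]
        obtain t c d where "n \<le> t \<and> t < n + gates C \<and> (t, ?r) \<in> (cedges n C)\<^sup>* \<and>
          {c, d} = {lft C t, rgt C t} \<and> x \<in> \<kappa> c \<and> \<not> meetsH (\<kappa> c) l (2*a+1) \<and> meetsH (\<kappa> d) l (2*a+1)"
          by blast
        then show ?thesis using el(2) by (meson rtrancl_trans)
      next
        case False
        then show ?thesis using m xr g less.prems(1) by (intro exI[of _ u] exI[of _ ?r] exI[of _ ?l]) auto
      qed
    qed
  qed
qed


end



context cfc begin
definition charged :: "nat \<Rightarrow> nat \<Rightarrow> nat \<Rightarrow> nat \<Rightarrow> bool" where
  "charged k m q t \<longleftrightarrow> n \<le> t \<and> t < n + gates C \<and>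
  (meetsH (\<kappa> (lft C t)) (m-1) (2*q+1) \<noteq> meetsH (\<kappa> (rgt C t)) (m-1) (2*q+1)) \<and>
  (\<forall>l. m \<le> l \<and> l < k \<longrightarrow>
     (even (q div 2^(l-m)) \<longrightarrow> \<not> meetsH (\<kappa> t) l (q div 2^(l-m) + 1)) \<and>
     (odd (q div 2^(l-m)) \<longrightarrow> meetsH (\<kappa> (lft C t)) l (q div 2^(l-m)) \<and> meetsH (\<kappa> (rgt C t)) l (q div 2^(l-m))))"

lemma blk_div: "(x::nat) < B \<Longrightarrow> (a*B + x) div B = a"
  by simp

lemma div_up: assumes "z div 2^m0 = 2*q \<or> z div 2^m0 = 2*q+1" "Suc m0 \<le> l"
  shows "(z::nat) div 2^l = q div 2^(l - Suc m0)"
proof -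
  have "z div 2^Suc m0 = q"
  proof -
    have "z div 2^Suc m0 = z div (2^m0 * 2)" by (simp add: mult.commute)
    also have "\<dots> = z div 2^m0 div 2" by (rule div_mult2_eq)
    finally show ?thesis using assms(1) by auto
  qed
  moreover have "(2::nat)^l = 2^Suc m0 * 2^(l - Suc m0)" using assms(2)
    by (metis le_add_diff_inverse power_add)
  ultimately show ?thesis by (metis div_mult2_eq)
qed

lemma block:
  assumes comp: "computes n C (sierp k)" and nk: "n = 2^k" and mm: "m = Suc m0" "m \<le> k"
    and q: "q < 2^(k-m)" and i: "i < 2^m0"
  shows "\<exists>t. charged k m q t \<and> (\<exists>c\<in>{lft C t, rgt C t}. q*2^m + i \<in> \<kappa> c) \<and>
     (\<forall>y\<in>\<kappa> t. y div 2^m0 = 2*q \<longrightarrow> y \<le> q*2^m+i)"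
proof -
  define r where "r = q*2^m + (2^m0 + i)"
  define x where "x = q*2^m + i"
  have p2: "(2::nat)^m = 2*2^m0" using mm by simp
  have kk: "k - m + m = k" using mm by simp
  have r2: "r = (2*q+1)*2^m0 + i" unfolding r_def p2 by (simp add: algebra_simps)
  have x2: "x = (2*q)*2^m0 + i" unfolding x_def p2 by (simp add: algebra_simps)
  have rlt: "r < n"
  proof -
    have "r < (q+1)*2^m" unfolding r_def using i p2 by (simp add: algebra_simps)
    also have "\<dots> \<le> 2^(k-m)*2^m" using q by (intro mult_le_mono1) simp
    also have "\<dots> = n" using nk kk by (metis power_add)
    finally show ?thesis .
  qed
  have im: "2^m0 + i < 2^m" using i p2 by simp
  have kron: "sierp k r (q'*2^m + c) = (sierp (k-m) q q' \<and> sierp m (2^m0+i) c)" if "c < 2^m" for q' c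
    using sierp_kron[OF im that, of "k-m" q q'] kk unfolding r_def by simp
  note kr = kappa_out[OF comp rlt]
  have xin: "x \<in> \<kappa> (outp C r)"
  proof -
    have "sierp m (2^m0+i) i" using i mm sierp_diag[OF i] by (simp add: sierp_Suc)
    then have "sierp k r x" unfolding x_def using kron[of i q] i p2 q sierp_diag[OF q] by simp
    then show ?thesis using kr sierp_range[of k r x] nk by auto
  qed
  have rin: "r \<in> \<kappa> (outp C r)" using kr rlt nk sierp_diag[of r k] by auto
  have xd: "x div 2^m0 = 2*q" unfolding x2 using i by simp
  have rd: "r div 2^m0 = 2*q+1" unfolding r2 using blk_div[OF i, of "2*q+1"] by simp
  have mt: "meetsH (\<kappa> (outp C r)) m0 (2*q+1)" using rin rd unfolding meetsH_def by blast
  have ol: "outp C r < n + gates C" using wf rlt unfolding wf_circuit_def by auto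
  obtain t c d where t: "n \<le> t" "t < n + gates C" "(t, outp C r) \<in> (cedges n C)\<^sup>*"
     "{c, d} = {lft C t, rgt C t}" "x \<in> \<kappa> c" "\<not> meetsH (\<kappa> c) m0 (2*q+1)" "meetsH (\<kappa> d) m0 (2*q+1)"
    using walk[OF ol xin xd mt] by blast
  have tsub: "\<kappa> t \<subseteq> \<kappa> (outp C r)" using sub_rt[OF t(3)] .
  note gk = gate_kappa[OF t(1,2)]
  have csub: "\<kappa> c \<subseteq> \<kappa> t" "\<kappa> d \<subseteq> \<kappa> t" using t(4) gk by (metis doubleton_eq_iff)+
  have cd: "(lft C t = c \<and> rgt C t = d) \<or> (lft C t = d \<and> rgt C t = c)" using t(4) by (metis doubleton_eq_iff)
  have ch: "charged k m q t"
    unfolding charged_def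
  proof (intro conjI allI impI)
    show "n \<le> t" "t < n + gates C" by (rule t(1), rule t(2))
    show "meetsH (\<kappa> (lft C t)) (m-1) (2*q+1) \<noteq> meetsH (\<kappa> (rgt C t)) (m-1) (2*q+1)"
      using cd t(6,7) mm by auto
  next
    fix l assume l: "m \<le> l \<and> l < k" "even (q div 2^(l-m))"
    show "\<not> meetsH (\<kappa> t) l (q div 2^(l-m) + 1)"
    proof
      assume "meetsH (\<kappa> t) l (q div 2^(l-m) + 1)"
      then obtain y where y: "y \<in> \<kappa> t" "y div 2^l = q div 2^(l-m) + 1" unfolding meetsH_def by blast
      then have "sierp k r y" using tsub kr by auto
      then have "y \<le> r" by (rule sierp_le)
      then have "y div 2^l \<le> r div 2^l" by (rule div_le_mono)
      moreover have "r div 2^l = q div 2^(l-m)" using div_up[of r m0 q l] rd l mm by auto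
      ultimately show False using y by simp
    qed
  next
    fix l assume l: "m \<le> l \<and> l < k" "odd (q div 2^(l-m))"
    have "x div 2^l = q div 2^(l-m)" using div_up[of x m0 q l] xd l mm by auto
    then have mc: "meetsH (\<kappa> c) l (q div 2^(l-m))" using t(5) unfolding meetsH_def by blast
    obtain y where "y \<in> \<kappa> d" "y div 2^m0 = 2*q+1" using t(7) unfolding meetsH_def by blast
    then have md: "meetsH (\<kappa> d) l (q div 2^(l-m))" using div_up[of y m0 q l] l mm unfolding meetsH_def by auto
    show "meetsH (\<kappa> (lft C t)) l (q div 2^(l-m))" "meetsH (\<kappa> (rgt C t)) l (q div 2^(l-m))"
      using cd mc md by auto
  qed
  have lastp: "\<forall>y\<in>\<kappa> t. y div 2^m0 = 2*q \<longrightarrow> y \<le> x"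
  proof (intro ballI impI)
    fix y assume y: "y \<in> \<kappa> t" "y div 2^m0 = 2*q"
    define c' where "c' = y mod 2^m0"
    have ye: "y = q*2^m + c'" unfolding c'_def p2 using y(2) div_mult_mod_eq[of y "2^m0"]
      by (simp add: algebra_simps)
    have c'l: "c' < 2^m0" unfolding c'_def by simp
    have "sierp k r y" using y tsub kr by auto
    then have "sierp m (2^m0+i) c'" using kron[of c' q] ye c'l p2 by simp
    then have "sierp m0 i c'" using mm c'l i by (simp add: sierp_Suc)
    then have "c' \<le> i" by (rule sierp_le)
    then show "y \<le> x" unfolding x_def ye by simp
  qed
  show ?thesis using ch cd t(5) lastp unfolding x_def by (intro exI[of _ t]) auto
qed


end



context cfc begin
lemma meets_mono: "S \<subseteq> T \<Longrightarrow> meetsH S l p \<Longrightarrow> meetsH T l p"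
  unfolding meetsH_def by blast

lemma par: "(a::nat) div 2 = a' div 2 \<Longrightarrow> a \<noteq> a' \<Longrightarrow> (even a \<and> a' = a+1) \<or> (even a' \<and> a = a'+1)"
  by presburger

lemma ev2: "even (a::nat) \<Longrightarrow> a div 2 = b \<Longrightarrow> a = 2*b" by presburger
lemma od2: "odd (a::nat) \<Longrightarrow> a div 2 = b \<Longrightarrow> a = 2*b+1" by presburger

lemma div_step: "m \<le> l \<Longrightarrow> (q::nat) div 2^(Suc l - m) = q div 2^(l-m) div 2"
proof -
  assume "m \<le> l"
  then have "(2::nat)^(Suc l - m) = 2^(l-m) * 2" by (simp add: Suc_diff_le)
  then show ?thesis by (simp add: div_mult2_eq)
qed

lemma disj:
  assumes c: "charged k m q t" and c': "charged k m' q' t" and m: "1 \<le> m" "m \<le> m'" "m' \<le> k"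
    and q: "q < 2^(k-m)" "q' < 2^(k-m')"
  shows "m = m' \<and> q = q'"
proof -
  have t: "n \<le> t" "t < n + gates C" using c unfolding charged_def by blast+
  note gk = gate_kappa[OF t]
  have eq: "q div 2^(l-m) = q' div 2^(l-m')" if "m' \<le> l" "l \<le> k" for l
    using that(2)
  proof (induction l rule: inc_induct)
    case base
    show ?case using q by simp
  next
    case (step l)
    have ml: "m \<le> l" "m' \<le> l" using that(1) step.hyps m by auto
    show ?case
    proof (rule ccontr)
      assume ne: "q div 2^(l-m) \<noteq> q' div 2^(l-m')"
      have "q div 2^(l-m) div 2 = q' div 2^(l-m') div 2"
        using step.IH div_step[OF ml(1), of q] div_step[OF ml(2), of q'] by simp
      from par[OF this ne] show False
      proof
        assume a: "even (q div 2^(l-m)) \<and> q' div 2^(l-m') = q div 2^(l-m) + 1"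
        then have "\<not> meetsH (\<kappa> t) l (q div 2^(l-m) + 1)" using c ml step.hyps unfolding charged_def by auto
        moreover have "meetsH (\<kappa> (lft C t)) l (q' div 2^(l-m'))" using c' ml step.hyps a unfolding charged_def by auto
        ultimately show False using a meets_mono[OF gk(2)] by auto
      next
        assume a: "even (q' div 2^(l-m')) \<and> q div 2^(l-m) = q' div 2^(l-m') + 1"
        then have "\<not> meetsH (\<kappa> t) l (q' div 2^(l-m') + 1)" using c' ml step.hyps unfolding charged_def by auto
        moreover have "meetsH (\<kappa> (lft C t)) l (q div 2^(l-m))" using c ml step.hyps a unfolding charged_def by auto
        ultimately show False using a meets_mono[OF gk(2)] by auto
      qed
    qed
  qed
  have e1: "q div 2^(m'-m) = q'" using eq[of m'] m by simp
  show ?thesis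
  proof (cases "m = m'")
    case True then show ?thesis using e1 by simp
  next
    case False
    define l where "l = m' - 1"
    have l: "m \<le> l" "l < k" "Suc l = m'" using False m unfolding l_def by auto
    have pd: "q div 2^(l-m) div 2 = q'" using e1 div_step[OF l(1), of q] l(3) by simp
    have own: "meetsH (\<kappa> (lft C t)) l (2*q'+1) \<noteq> meetsH (\<kappa> (rgt C t)) l (2*q'+1)"
      using c' l unfolding charged_def by auto
    show ?thesis
    proof (cases "even (q div 2^(l-m))")
      case True
      then have "q div 2^(l-m) = 2*q'" using pd ev2 by blast
      then have "\<not> meetsH (\<kappa> t) l (2*q'+1)" using c l True unfolding charged_def by auto
      then show ?thesis using own meets_mono[OF gk(2)] meets_mono[OF gk(3)] by auto
    next
      case False
      then have "q div 2^(l-m) = 2*q'+1" using pd od2 by blast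
      then show ?thesis using c l False own unfolding charged_def by auto
    qed
  qed
qed


end



context cfc begin
lemma charged_range: "charged k m q t \<Longrightarrow> n \<le> t \<and> t < n + gates C"
  unfolding charged_def by blast

lemma charged_fin: "finite {t. charged k m q t}"
  by (rule finite_subset[of _ "{n..<n + gates C}"]) (auto dest: charged_range)

lemma block_card:
  assumes comp: "computes n C (sierp k)" and nk: "n = 2^k" and mm: "1 \<le> m" "m \<le> k"
    and q: "q < 2^(k-m)"
  shows "2^(m-1) \<le> card {t. charged k m q t}"
proof -
  obtain m0 where m0: "m = Suc m0" using mm by (cases m) auto
  define f where "f i = (SOME t. charged k m q t \<and> (\<exists>c\<in>{lft C t, rgt C t}. q*2^m + i \<in> \<kappa> c) \<and>
     (\<forall>y\<in>\<kappa> t. y div 2^m0 = 2*q \<longrightarrow> y \<le> q*2^m+i))" for i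
  have fP: "charged k m q (f i) \<and> (\<exists>c\<in>{lft C (f i), rgt C (f i)}. q*2^m + i \<in> \<kappa> c) \<and>
     (\<forall>y\<in>\<kappa> (f i). y div 2^m0 = 2*q \<longrightarrow> y \<le> q*2^m+i)" if "i < 2^m0" for i
    unfolding f_def by (rule someI_ex, rule block[OF comp nk m0 mm(2) q that])
  have p2: "(2::nat)^m = 2*2^m0" using m0 by simp
  have inj: "inj_on f {..<2^m0}"
  proof (rule inj_onI)
    have key: "False" if "i < 2^m0" "i' < 2^m0" "i < i'" "f i = f i'" for i i'
    proof -
      have ch: "charged k m q (f i)" using fP[OF that(1)] by blast
      then have t: "n \<le> f i" "f i < n + gates C" using charged_range by auto
      note gk = gate_kappa[OF t]
      have "q*2^m + i' \<in> \<kappa> (f i)" using fP[OF that(2)] that(4) gk by auto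
      moreover have "(q*2^m + i') div 2^m0 = 2*q"
      proof -
        have "q*2^m + i' = (2*q)*2^m0 + i'" by (simp add: p2)
        then show ?thesis using blk_div[OF that(2), of "2*q"] by presburger
      qed
      ultimately have "q*2^m + i' \<le> q*2^m + i" using fP[OF that(1)] by blast
      then show False using that(3) by simp
    qed
    fix i i' assume "i \<in> {..<2^m0}" "i' \<in> {..<2^m0}" "f i = f i'"
    then have ii: "i < 2^m0" "i' < 2^m0" "f i = f i'" by auto
    show "i = i'"
    proof (rule ccontr)
      assume "i \<noteq> i'"
      then have "i < i' \<or> i' < i" by arith
      then show False using key[of i i'] key[of i' i] ii by auto
    qed
  qed
  have fin: "finite {t. charged k m q t}"
    by (rule finite_subset[of _ "{n..<n + gates C}"]) (auto dest: charged_range)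
  have "card {..<(2::nat)^m0} \<le> card {t. charged k m q t}"
  proof (rule card_inj_on_le[OF inj _ fin])
    show "f ` {..<2^m0} \<subseteq> {t. charged k m q t}" using fP by blast
  qed
  then show ?thesis using m0 by simp
qed

lemma total:
  assumes comp: "computes n C (sierp k)" and nk: "n = 2^k"
  shows "k * 2^(k-1) \<le> gates C"
proof -
  define I where "I = Sigma {1..k} (\<lambda>m. {..<(2::nat)^(k-m)})"
  define A where "A p = {t. charged k (fst p) (snd p) t}" for p
  have finI: "finite I" unfolding I_def by auto
  have finA: "\<forall>p\<in>I. finite (A p)"
    unfolding A_def using charged_fin by blast
  have dj: "\<forall>p\<in>I. \<forall>p'\<in>I. p \<noteq> p' \<longrightarrow> A p \<inter> A p' = {}"
  proof (intro ballI impI)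
    fix p p' assume p: "p \<in> I" "p' \<in> I" "p \<noteq> p'"
    obtain m q m' q' where pp: "p = (m,q)" "p' = (m',q')" by (cases p, cases p') auto
    show "A p \<inter> A p' = {}"
    proof (rule ccontr)
      assume "A p \<inter> A p' \<noteq> {}"
      then obtain t where t: "charged k m q t" "charged k m' q' t" unfolding A_def pp by auto
      have r: "1 \<le> m" "m \<le> k" "q < 2^(k-m)" "1 \<le> m'" "m' \<le> k" "q' < 2^(k-m')"
        using p pp unfolding I_def by auto
      show False
      proof (cases "m \<le> m'")
        case True then show False using disj[OF t(1,2) r(1) True r(5) r(3) r(6)] p pp by auto
      next
        case False then show False using disj[OF t(2,1) r(4) _ r(2) r(6) r(3)] p pp by auto
      qed
    qed
  qed
  have "card (\<Union> (A ` I)) = (\<Sum>p\<in>I. card (A p))" by (rule card_UN_disjoint[OF finI finA dj])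
  moreover have "card (\<Union> (A ` I)) \<le> gates C"
  proof -
    have "\<Union> (A ` I) \<subseteq> {n..<n + gates C}" unfolding A_def using charged_range by fastforce
    then show ?thesis using card_mono[of "{n..<n + gates C}"] by fastforce
  qed
  moreover have "(\<Sum>p\<in>I. (2::nat)^(fst p - 1)) \<le> (\<Sum>p\<in>I. card (A p))"
  proof (rule sum_mono)
    fix p assume "p \<in> I"
    then show "2^(fst p - 1) \<le> card (A p)" unfolding I_def A_def
      using block_card[OF comp nk] by auto
  qed
  moreover have "(\<Sum>p\<in>I. (2::nat)^(fst p - 1)) = k * 2^(k-1)"
  proof -
    have "(\<Sum>p\<in>I. (2::nat)^(fst p - 1)) = (\<Sum>m\<in>{1..k}. \<Sum>q<(2::nat)^(k-m). (2::nat)^(m-1))"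
      unfolding I_def by (subst sum.Sigma) (auto simp: case_prod_beta)
    also have "\<dots> = (\<Sum>m\<in>{1..k}. (2::nat)^(k-1))"
    proof (rule sum.cong)
      fix m assume "m \<in> {1..k}"
      then have "k - m + (m - 1) = k - 1" by auto
      then show "(\<Sum>q<(2::nat)^(k-m). (2::nat)^(m-1)) = 2^(k-1)" by (simp add: power_add[symmetric])
    qed simp
    finally show ?thesis by simp
  qed
  ultimately show ?thesis by linarith
qed

end

theorem theorem4:
  fixes k n :: nat and C :: circuit
  assumes "k \<ge> 2" and "n = 2 ^ k"
    and "wf_circuit n C"
    and "cancellation_free n C"
    and "computes n C (sierp k)"
  shows "real (gates C) \<ge> 1/2 * real n * log 2 (real n)"
proof -
  interpret cfc n C using assms(3,4) by unfold_locales
  have g: "k * 2^(k-1) \<le> gates C" using total[OF assms(5,2)] .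
  have "(2::nat)^k = 2 * 2^(k-1)" using assms(1) by (metis Suc_diff_1 less_le_trans pos2 power_Suc zero_less_two)
  then have e: "real n = 2 * 2^(k-1)" using assms(2) by (metis of_nat_numeral of_nat_mult of_nat_power)
  have l: "log 2 (real n) = real k" using assms(2) by simp
  have "1/2 * real n * log 2 (real n) = real (k * 2^(k-1))" using e l by simp
  then show ?thesis using g by (metis of_nat_le_iff)
qed


end
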